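(* Let $b\ge2$ be an integer and let $\gamma_0,\dots,\gamma_{b-1}$ be positive numbers, at least one greater than $1$ and at least one less than $1$. Let $X$ be the set of $x\in[0,1]$ such that $\sum_{n=1}^\infty\gamma_{x(1)}\gamma_{x(2)}\cdots\gamma_{x(n)}<+\infty$. Then the Hausdorff dimension (with respect to the Euclidean metric) of $X$ is $$\dim X=\min_{s\ge0}\frac{\log\left(\sum_{i=0}^{b-1}\gamma_i^{-s}\right)}{\log b}.$$
   Context: For $x\in[0,1]$, $x(j)$ is the $j$th digit of the $b$-ary expansion of $x$, where expansions with infinitely recurring digit $b-1$ are forbidden so that the expansion is unique. *)

theory Defs
  imports "HOL-Analysis.Analysis"
begin

definition hd_term :: "real \<Rightarrow> real set \<Rightarrow> real" where
  "hd_term s U = (if U = {} then 0 else if s = 0 then 1 else diameter U powr s)"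

definition hausdorff_approx :: "real \<Rightarrow> real \<Rightarrow> real set \<Rightarrow> ennreal" where
  "hausdorff_approx s \<delta> A =
     (INF U \<in> {U :: nat \<Rightarrow> real set. A \<subseteq> (\<Union>i. U i) \<and>
                 (\<forall>i. bounded (U i) \<and> diameter (U i) \<le> \<delta>)}.
        (\<Sum>i. ennreal (hd_term s (U i))))"

definition hausdorff_measure :: "real \<Rightarrow> real set \<Rightarrow> ennreal" where
  "hausdorff_measure s A = (SUP \<delta> \<in> {0<..}. hausdorff_approx s \<delta> A)"

definition hausdorff_dim :: "real set \<Rightarrow> real" where
  "hausdorff_dim A = Inf {s. 0 \<le> s \<and> hausdorff_measure s A = 0}"

text \<open>j-th digit (j \<ge> 1) of the b-ary expansion of x \<in> [0,1], the expansion not ending in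
  infinitely recurring b-1 (greedy expansion; for x = 1 all digits after the point are 0).\<close>
definition digit :: "nat \<Rightarrow> real \<Rightarrow> nat \<Rightarrow> nat" where
  "digit b x j = nat (\<lfloor>x * real b ^ j\<rfloor> mod int b)"

end

theory Submission
  imports Defs
begin


fun R :: "nat \<Rightarrow> (nat \<Rightarrow> real) \<Rightarrow> nat \<Rightarrow> nat \<Rightarrow> real" where
  "R b g 0 K = 1"
| "R b g (Suc n) K = g (K mod b) * R b g n (K div b)"

lemma R_split: "R b g (m + n) K = R b g m K * R b g n (K div b ^ m)"
proof (induction m arbitrary: K)
  case 0 then show ?case by simp
next
  case (Suc m) then show ?case by (simp add: div_mult2_eq mult.commute)
qed

lemma R_mod: "b > 0 \<Longrightarrow> R b g m K = R b g m (K mod b ^ m)"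
proof (induction m arbitrary: K)
  case 0 then show ?case by simp
next
  case (Suc m)
  have "K mod b ^ Suc m mod b = K mod b"
    by (simp add: mod_mod_cancel)
  moreover have "K mod b ^ Suc m div b = (K div b) mod b ^ m"
    using Suc.prems by (simp add: mod_mult2_eq mult.commute)
  ultimately show ?case using Suc by simp
qed

lemma R_pos: "(\<And>i. i < b \<Longrightarrow> g i > 0) \<Longrightarrow> b > 0 \<Longrightarrow> R b g n K > 0"
  by (induction n arbitrary: K) auto

lemma R_powr: "(\<And>i. i < b \<Longrightarrow> g i > 0) \<Longrightarrow> b > 0 \<Longrightarrow>
   R b (\<lambda>i. g i powr e) n K = R b g n K powr e"
proof (induction n arbitrary: K)
  case 0 then show ?case by simp
next
  case (Suc n)
  have "g (K mod b) > 0" using Suc.prems by auto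
  moreover have "R b g n (K div b) > 0" using Suc.prems R_pos by blast
  ultimately show ?case using Suc by (simp add: powr_mult)
qed

lemma R_le: "(\<And>i. i < b \<Longrightarrow> 0 \<le> g i \<and> g i \<le> G) \<Longrightarrow> b > 0 \<Longrightarrow> R b g n K \<le> G ^ n"
proof (induction n arbitrary: K)
  case 0 then show ?case by simp
next
  case (Suc n)
  have a: "0 \<le> g (K mod b) \<and> g (K mod b) \<le> G" using Suc.prems by auto
  have "0 \<le> R b g n (K div b)" 
  proof (induction n arbitrary: K)
    case 0 then show ?case by simp
  next case (Suc n) then show ?case using Suc.prems
      by (simp add: \<open>\<And>i. i < b \<Longrightarrow> 0 \<le> g i \<and> g i \<le> G\<close> \<open>0 < b\<close>)
  qed
  moreover have "0 \<le> G" using Suc.prems(1)[of 0] Suc.prems(2) by auto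
  moreover have "R b g n (K div b) \<le> G^n" using Suc.IH Suc.prems by blast
  ultimately show ?case using a
    by (simp add: mult_mono)
qed

lemma sum_blocks: fixes h :: "nat \<Rightarrow> 'a::comm_monoid_add" shows "(\<Sum>K<m * b. h K) = (\<Sum>q<m. \<Sum>r<b. h (q * b + r))"
proof -
  have "(\<Sum>K<m * b. h K) = (\<Sum>q<m. sum h {q * b..<q * b + b})"
    using sum.nat_group[where g=h and n=m and k=b] by simp
  also have "\<dots> = (\<Sum>q<m. \<Sum>r<b. h (q * b + r))"
  proof (rule sum.cong[OF refl])
    fix q
    show "sum h {q * b..<q * b + b} = (\<Sum>r<b. h (q * b + r))"
      using sum.shift_bounds_nat_ivl[of h 0 "q*b" b]
      by (simp add: atLeast0LessThan add.commute)
  qed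
  finally show ?thesis .
qed

lemma R_sum: "b > 0 \<Longrightarrow> (\<Sum>K<b ^ n. R b g n K) = (\<Sum>i<b. g i) ^ n"
proof (induction n)
  case 0 then show ?case by simp
next
  case (Suc n)
  have "(\<Sum>K<b ^ Suc n. R b g (Suc n) K) = (\<Sum>q<b ^ n. \<Sum>r<b. R b g (Suc n) (q * b + r))"
    by (simp add: sum_blocks power_Suc2 del: power_Suc)
  also have "\<dots> = (\<Sum>q<b ^ n. \<Sum>r<b. g r * R b g n q)"
    using Suc.prems by (intro sum.cong refl) simp
  also have "\<dots> = (\<Sum>q<b ^ n. R b g n q) * (\<Sum>i<b. g i)"
    by (simp add: sum_distrib_left sum_distrib_right mult.commute)
  finally show ?case using Suc by simp
qed



lemma floor_step_div:
  assumes "N > 0"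
  shows "\<lfloor>x * real N ^ Suc k\<rfloor> div int N = \<lfloor>x * real N ^ k\<rfloor>"
proof -
  have "\<lfloor>x * real N ^ Suc k\<rfloor> div int N = \<lfloor>x * real N ^ Suc k / real_of_int (int N)\<rfloor>"
    by (rule floor_divide_real_eq_div[symmetric]) simp
  also have "x * real N ^ Suc k / real_of_int (int N) = x * real N ^ k"
    using assms by simp
  finally show ?thesis .
qed

lemma floor_step_mod:
  assumes "N > 0"
  shows "\<lfloor>x * real N ^ Suc k\<rfloor> mod int N = int (digit N x (Suc k))"
  using assms by (simp add: digit_def)

lemma floor_step:
  assumes "N > 0"
  shows "\<lfloor>x * real N ^ Suc k\<rfloor> = int N * \<lfloor>x * real N ^ k\<rfloor> + int (digit N x (Suc k))"
  using floor_step_div[OF assms, of x k] floor_step_mod[OF assms, of x k]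
  by (metis div_mult_mod_eq mult.commute)

lemma prod_digits_R:
  assumes "x \<ge> 0" "b > 0"
  shows "(\<Prod>j=1..n. g (digit b x j)) = R b g n (nat \<lfloor>x * real b ^ n\<rfloor>)"
proof (induction n)
  case 0 then show ?case by simp
next
  case (Suc n)
  have nn: "\<lfloor>x * real b ^ Suc n\<rfloor> \<ge> 0" using assms by simp
  have "nat \<lfloor>x * real b ^ Suc n\<rfloor> mod b = digit b x (Suc n)"
    using floor_step_mod[OF assms(2), of x n] nn by (metis nat_int nat_mod_distrib of_nat_0_le_iff)
  moreover have "nat \<lfloor>x * real b ^ Suc n\<rfloor> div b = nat \<lfloor>x * real b ^ n\<rfloor>"
    using floor_step_div[OF assms(2), of x n] nn by (metis nat_div_distrib nat_int of_nat_0_le_iff)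
  ultimately show ?case using Suc by (simp add: mult.commute)
qed

lemma floor_eq_digits:
  assumes "N > 0" "0 \<le> z" "z < 1" "0 \<le> z'" "z' < 1"
    and "\<forall>j. 1 \<le> j \<and> j \<le> k \<longrightarrow> digit N z j = digit N z' j"
  shows "\<lfloor>z * real N ^ k\<rfloor> = \<lfloor>z' * real N ^ k\<rfloor>"
  using assms(6)
proof (induction k)
  case 0
  have "\<lfloor>z\<rfloor> = 0" "\<lfloor>z'\<rfloor> = 0" using assms by (simp_all add: floor_eq_iff)
  then show ?case by simp
next
  case (Suc k)
  then show ?case using floor_step[OF assms(1), of z k] floor_step[OF assms(1), of z' k]
    by auto
qed

lemma floor_eq_close:
  fixes z z' :: real
  assumes "N > 0" "\<lfloor>z * real N ^ k\<rfloor> = \<lfloor>z' * real N ^ k\<rfloor>"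
  shows "\<bar>z - z'\<bar> < 1 / real N ^ k"
proof -
  have "\<bar>z * real N ^ k - z' * real N ^ k\<bar> < 1"
    using assms(2) by linarith
  then have "\<bar>z - z'\<bar> * real N ^ k < 1"
    using assms(1) by (simp add: abs_mult left_diff_distrib[symmetric])
  then show ?thesis using assms(1) by (simp add: field_simps)
qed

lemma first_diff_digit:
  assumes "N \<ge> 2" "0 \<le> z" "z < 1" "0 \<le> z'" "z' < 1" "z \<noteq> z'"
  shows "\<exists>k. (\<forall>j. 1 \<le> j \<and> j \<le> k \<longrightarrow> digit N z j = digit N z' j)
             \<and> digit N z (Suc k) \<noteq> digit N z' (Suc k) \<and> \<bar>z - z'\<bar> < 1 / real N ^ k"
proof -
  have N0: "N > 0" using assms by simp
  have ex: "\<exists>k. digit N z (Suc k) \<noteq> digit N z' (Suc k)"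
  proof (rule ccontr)
    assume na: "\<not> (\<exists>k. digit N z (Suc k) \<noteq> digit N z' (Suc k))"
    have all: "\<forall>j. 1 \<le> j \<longrightarrow> digit N z j = digit N z' j"
    proof (intro allI impI)
      fix j :: nat assume "1 \<le> j"
      then have "j = Suc (j - 1)" by simp
      then show "digit N z j = digit N z' j" using na by metis
    qed
    have "0 < \<bar>z - z'\<bar>" using assms by simp
    then obtain k where k: "1 / \<bar>z - z'\<bar> < real N ^ k"
      using real_arch_pow[of "real N" "1 / \<bar>z - z'\<bar>"] assms(1) by auto
    have "\<bar>z - z'\<bar> < 1 / real N ^ k"
      using floor_eq_close[OF N0 floor_eq_digits[OF N0 assms(2-5)]] all by blast
    moreover have "real N ^ k > 0" using N0 by simp
    ultimately have "\<bar>z - z'\<bar> * real N ^ k < 1" by (simp add: field_simps)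
    with k \<open>0 < \<bar>z - z'\<bar>\<close> show False by (simp add: field_simps)
  qed
  define k where "k = (LEAST k. digit N z (Suc k) \<noteq> digit N z' (Suc k))"
  have dk: "digit N z (Suc k) \<noteq> digit N z' (Suc k)"
    unfolding k_def by (rule LeastI_ex[OF ex])
  have agree: "\<forall>j. 1 \<le> j \<and> j \<le> k \<longrightarrow> digit N z j = digit N z' j"
  proof (intro allI impI)
    fix j assume j: "1 \<le> j \<and> j \<le> k"
    then have i: "j = Suc (j - 1)" "j - 1 < k" by auto
    define i where "i = j - 1"
    show "digit N z j = digit N z' j"
      using not_less_Least[of i "\<lambda>k. digit N z (Suc k) \<noteq> digit N z' (Suc k)"] i k_def i_def by auto
  qed
  show ?thesis
    using agree dk floor_eq_close[OF N0 floor_eq_digits[OF N0 assms(2-5) agree]] by blast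
qed



fun Aseq :: "(nat \<Rightarrow> nat) \<Rightarrow> nat \<Rightarrow> nat \<Rightarrow> nat" where
  "Aseq a B 0 = 0"
| "Aseq a B (Suc k) = B * Aseq a B k + a k"

definition Tval :: "(nat \<Rightarrow> nat) \<Rightarrow> nat \<Rightarrow> nat \<Rightarrow> real" where
  "Tval a B k = (\<Sum>l. real (a (l + k)) / real B ^ Suc l)"

locale blockseq =
  fixes a :: "nat \<Rightarrow> nat" and B :: nat
  assumes B2: "B \<ge> 2" and abnd: "\<And>l. a l \<le> B - 2"
begin

lemma summ: "summable (\<lambda>l. real (a (l + k)) / real B ^ Suc l)"
proof (rule summable_comparison_test[where g="\<lambda>l. (real B - 2) / real B * (1 / real B) ^ l"])
  show "\<exists>N. \<forall>n\<ge>N. norm (real (a (n + k)) / real B ^ Suc n) \<le> (real B - 2) / real B * (1 / real B) ^ n"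
  proof (intro exI allI impI)
    fix n :: nat
    have "real (a (n + k)) \<le> real B - 2" using abnd[of "n+k"] B2 by linarith
    then have "real (a (n + k)) / real B ^ Suc n \<le> (real B - 2) / real B ^ Suc n"
      using B2 by (simp add: divide_right_mono)
    also have "\<dots> = (real B - 2) / real B * (1 / real B) ^ n"
      by (simp add: power_divide field_simps)
    finally show "norm (real (a (n + k)) / real B ^ Suc n) \<le> (real B - 2) / real B * (1 / real B) ^ n"
      by simp
  qed
  show "summable (\<lambda>l. (real B - 2) / real B * (1 / real B) ^ l)"
    using B2 by (intro summable_mult summable_geometric) simp
qed

lemma T_nonneg: "0 \<le> Tval a B k"
  unfolding Tval_def by (rule suminf_nonneg[OF summ]) simp

lemma T_le: "Tval a B k \<le> (real B - 2) / (real B - 1)"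
proof -
  have "Tval a B k \<le> (\<Sum>l. (real B - 2) / real B * (1 / real B) ^ l)"
    unfolding Tval_def
  proof (rule suminf_le[OF _ summ])
    fix n :: nat
    have "real (a (n + k)) \<le> real B - 2" using abnd[of "n+k"] B2 by linarith
    then have "real (a (n + k)) / real B ^ Suc n \<le> (real B - 2) / real B ^ Suc n"
      using B2 by (simp add: divide_right_mono)
    also have "\<dots> = (real B - 2) / real B * (1 / real B) ^ n"
      by (simp add: power_divide field_simps)
    finally show "real (a (n + k)) / real B ^ Suc n \<le> (real B - 2) / real B * (1 / real B) ^ n" .
    show "summable (\<lambda>l. (real B - 2) / real B * (1 / real B) ^ l)"
      using B2 by (intro summable_mult summable_geometric) simp
  qed
  also have "\<dots> = (real B - 2) / real B * (1 / (1 - 1 / real B))"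
    using B2 by (subst suminf_mult) (simp_all add: suminf_geometric)
  also have "\<dots> = (real B - 2) / (real B - 1)"
    using B2 by (simp add: field_simps)
  finally show ?thesis .
qed

lemma T_lt1: "Tval a B k < 1"
proof -
  have "(real B - 2) / (real B - 1) < 1" using B2 by (simp add: field_simps)
  then show ?thesis using T_le[of k] by linarith
qed

lemma T_step: "Tval a B k = (real (a k) + Tval a B (Suc k)) / real B"
proof -
  let ?f = "\<lambda>l. real (a (l + k)) / real B ^ Suc l"
  have "(\<Sum>n. ?f (Suc n)) = suminf ?f - ?f 0"
    by (rule suminf_split_head[OF summ])
  moreover have "(\<Sum>n. ?f (Suc n)) = (\<Sum>n. real (a (n + Suc k)) / real B ^ Suc n / real B)"
    by (simp add: field_simps)
  moreover have "\<dots> = Tval a B (Suc k) / real B"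
    unfolding Tval_def using suminf_divide[OF summ[of "Suc k"], of "real B"] by simp
  ultimately show ?thesis unfolding Tval_def using B2 by (simp add: field_simps)
qed

definition v where "v = Tval a B 0"

lemma v_eq: "v * real B ^ k = real (Aseq a B k) + Tval a B k"
proof (induction k)
  case 0 then show ?case by (simp add: v_def)
next
  case (Suc k)
  have "v * real B ^ Suc k = real B * (real (Aseq a B k) + Tval a B k)"
    using Suc by (simp add: mult.commute mult.left_commute)
  also have "\<dots> = real B * real (Aseq a B k) + real (a k) + Tval a B (Suc k)"
    using B2 by (subst T_step) (simp add: field_simps)
  finally show ?case by simp
qed

lemma floor_v: "\<lfloor>v * real B ^ k\<rfloor> = int (Aseq a B k)"
  using v_eq[of k] T_nonneg[of k] T_lt1[of k] by (simp add: floor_eq_iff)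

lemma v_range: "0 \<le> v" "v < 1"
  using v_eq[of 0] T_nonneg[of 0] T_lt1[of 0] by simp_all

end



lemma summable_div_pow:
  fixes c :: real
  assumes "0 < c" "c < 1" "m > 0"
  shows "summable (\<lambda>n. c ^ (n div m))"
proof -
  define q where "q = root m c"
  have q0: "0 < q" and q1: "q < 1" using assms by (simp_all add: q_def)
  have qm: "q ^ m = c" using assms by (simp add: q_def real_root_pow_pos)
  have bnd: "c ^ (n div m) \<le> q ^ n / c" for n
  proof -
    have nn: "n = m * (n div m) + n mod m" by simp
    have "q ^ n = q ^ (m * (n div m)) * q ^ (n mod m)"
      by (subst nn) (simp only: power_add)
    then have e: "q ^ n = c ^ (n div m) * q ^ (n mod m)"
      by (simp add: power_mult qm)
    have "q ^ m \<le> q ^ (n mod m)"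
      using q0 q1 assms(3) by (intro power_decreasing) auto
    then have "c \<le> q ^ (n mod m)" using qm by simp
    then have "c ^ (n div m) * c \<le> q ^ n"
      unfolding e using assms by (intro mult_left_mono) auto
    then show ?thesis using assms by (simp add: field_simps)
  qed
  show ?thesis
  proof (rule summable_comparison_test[where g="\<lambda>n. q ^ n / c"])
    show "\<exists>N. \<forall>n\<ge>N. norm (c ^ (n div m)) \<le> q ^ n / c"
      using bnd assms by auto
    show "summable (\<lambda>n. q ^ n / c)"
      using q0 q1 by (intro summable_divide summable_geometric) simp
  qed
qed

lemma floor_pow_div:
  assumes "N > 0"
  shows "\<lfloor>x * real N ^ (k + r)\<rfloor> div int (N ^ r) = \<lfloor>x * real N ^ k\<rfloor>"
proof -
  have "\<lfloor>x * real N ^ (k + r)\<rfloor> div int (N ^ r) = \<lfloor>x * real N ^ (k + r) / real_of_int (int (N ^ r))\<rfloor>"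
    by (rule floor_divide_real_eq_div[symmetric]) simp
  also have "x * real N ^ (k + r) / real_of_int (int (N ^ r)) = x * real N ^ k"
    using assms by (simp add: power_add)
  finally show ?thesis .
qed

lemma Aseq_cong: "(\<And>l. l < k \<Longrightarrow> a l = a' l) \<Longrightarrow> Aseq a B k = Aseq a' B k"
  by (induction k) auto

definition Xset :: "nat \<Rightarrow> (nat \<Rightarrow> real) \<Rightarrow> real set" where
  "Xset b \<gamma> = {x \<in> {0..1}. summable (\<lambda>n. \<Prod>j=1..Suc n. \<gamma> (digit b x j))}"



locale cantor =
  fixes b :: nat and \<gamma> :: "nat \<Rightarrow> real" and m :: nat and W :: "nat set" and c t :: real
  assumes b2: "b \<ge> 2" and gpos: "\<forall>i<b. \<gamma> i > 0" and m1: "m \<ge> 1"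
    and Wsub: "\<forall>K\<in>W. K \<le> b ^ m - 2"
    and Wsp: "\<forall>K\<in>W. \<forall>K'\<in>W. K \<noteq> K' \<longrightarrow> K + 2 \<le> K' \<or> K' + 2 \<le> K"
    and WR: "\<forall>K\<in>W. R b \<gamma> m K \<le> c"
    and c0: "0 < c" and c1: "c < 1"
    and N2: "card W \<ge> 2" and t0: "t \<ge> 0"
    and NB: "real (card W) \<ge> real (b ^ m) powr t"
begin

definition "BB = b ^ m"
definition "NN = card W"
definition "word e = sorted_list_of_set W ! e"
definition "az z l = word (digit NN z (Suc l))"
definition "psi z = Tval (az z) BB 0"

lemma finW: "finite W"
  using Wsub by (metis finite_atMost finite_subset subsetI atMost_iff)

lemma BB2: "BB \<ge> 2"
proof -
  have "b ^ 1 \<le> b ^ m" using b2 m1 by (intro power_increasing) auto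
  then show ?thesis using b2 by (simp add: BB_def)
qed

lemma word_in: "e < NN \<Longrightarrow> word e \<in> W"
proof -
  assume e: "e < NN"
  have "sorted_list_of_set W ! e \<in> set (sorted_list_of_set W)"
    using e finW by (intro nth_mem) (simp add: NN_def)
  then show ?thesis using finW by (simp add: word_def)
qed

lemma word_inj: "e < NN \<Longrightarrow> e' < NN \<Longrightarrow> word e = word e' \<Longrightarrow> e = e'"
  using finW by (simp add: word_def NN_def nth_eq_iff_index_eq)

lemma digit_lt: "N > 0 \<Longrightarrow> digit N z j < N"
proof -
  assume N: "N > 0"
  have "\<lfloor>z * real N ^ j\<rfloor> mod int N < int N" "0 \<le> \<lfloor>z * real N ^ j\<rfloor> mod int N"
    using N by simp_all
  then show ?thesis unfolding digit_def by (simp add: nat_less_iff)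
qed

lemma NN2: "NN \<ge> 2" using N2 by (simp add: NN_def)

lemma az_W: "az z l \<in> W"
  unfolding az_def using NN2 by (intro word_in digit_lt) simp

lemma bs: "blockseq (az z) BB"
  using BB2 Wsub az_W by unfold_locales (auto simp: BB_def)

lemma psi_range: "0 \<le> psi z" "psi z < 1"
  using blockseq.v_range[OF bs[of z]] by (simp_all add: psi_def blockseq.v_def[OF bs])

lemma psi_v: "psi z = blockseq.v (az z) BB"
  by (simp add: psi_def blockseq.v_def[OF bs])

lemma floor_psi: "\<lfloor>psi z * real b ^ (m * k)\<rfloor> = int (Aseq (az z) BB k)"
proof -
  have "real b ^ (m * k) = real BB ^ k" by (simp add: BB_def power_mult)
  then show ?thesis using blockseq.floor_v[OF bs[of z], of k] by (simp add: psi_v)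
qed

lemma R_Aseq: "R b \<gamma> (m * k) (Aseq (az z) BB k) \<le> c ^ k"
proof (induction k)
  case 0 then show ?case by simp
next
  case (Suc k)
  let ?A = "Aseq (az z) BB k"
  have b0: "b > 0" using b2 by simp
  have lt: "az z k < BB" using az_W[of z k] Wsub BB2 by (auto simp: BB_def)
  have K: "Aseq (az z) BB (Suc k) = BB * ?A + az z k" by simp
  have bm: "0 < b ^ m" using b0 by simp
  have d: "Aseq (az z) BB (Suc k) div b ^ m = ?A"
    using lt bm unfolding K by (simp add: BB_def)
  have md: "Aseq (az z) BB (Suc k) mod b ^ m = az z k"
    using lt unfolding K by (simp add: BB_def)
  have "R b \<gamma> (m * Suc k) (Aseq (az z) BB (Suc k))
      = R b \<gamma> m (Aseq (az z) BB (Suc k)) * R b \<gamma> (m * k) ?A"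
    using R_split[of b \<gamma> m "m*k"] d by simp
  also have "R b \<gamma> m (Aseq (az z) BB (Suc k)) = R b \<gamma> m (az z k)"
    using R_mod[OF b0, of \<gamma> m] md by metis
  finally have e: "R b \<gamma> (m * Suc k) (Aseq (az z) BB (Suc k)) = R b \<gamma> m (az z k) * R b \<gamma> (m * k) ?A" .
  have p1: "0 \<le> R b \<gamma> m (az z k)" using R_pos[of b \<gamma>] gpos b0 by (simp add: less_imp_le)
  have p2: "R b \<gamma> m (az z k) \<le> c" using WR az_W by blast
  have p3: "0 \<le> R b \<gamma> (m * k) ?A" using R_pos[of b \<gamma>] gpos b0 by (simp add: less_imp_le)
  show ?case unfolding e using Suc p1 p2 p3 c0 by (simp add: mult_mono)
qed

lemma psi_X: "psi z \<in> Xset b \<gamma>"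
proof -
  let ?x = "psi z"
  have b0: "b > 0" using b2 by simp
  define G where "G = 1 + (\<Sum>i<b. \<gamma> i)"
  have gG: "0 \<le> \<gamma> i \<and> \<gamma> i \<le> G" if "i < b" for i
  proof -
    have "\<gamma> i \<le> (\<Sum>i<b. \<gamma> i)"
      using that gpos by (intro member_le_sum) (auto simp: less_imp_le)
    then show ?thesis using gpos that by (simp add: G_def less_imp_le)
  qed
  have G1: "G \<ge> 1" using gG[of 0] b0 gpos G_def
    by (smt (verit) sum_nonneg lessThan_iff)
  have bound: "(\<Prod>j=1..Suc n. \<gamma> (digit b ?x j)) \<le> G ^ m * c ^ (n div m)" for n
  proof -
    define k where "k = Suc n div m"
    define r where "r = Suc n mod m"
    have nr: "Suc n = r + m * k" by (simp add: k_def r_def)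
    have rm: "r \<le> m" using m1 by (simp add: r_def less_imp_le)
    define K where "K = nat \<lfloor>?x * real b ^ Suc n\<rfloor>"
    have Kn: "\<lfloor>?x * real b ^ Suc n\<rfloor> \<ge> 0" using psi_range[of z] by simp
    have "(\<Prod>j=1..Suc n. \<gamma> (digit b ?x j)) = R b \<gamma> (Suc n) K"
      unfolding K_def by (rule prod_digits_R[OF psi_range(1) b0])
    also have "\<dots> = R b \<gamma> r K * R b \<gamma> (m * k) (K div b ^ r)"
      unfolding nr by (rule R_split)
    also have "K div b ^ r = Aseq (az z) BB k"
    proof -
      have "K div b ^ r = nat (\<lfloor>?x * real b ^ (m * k + r)\<rfloor> div int (b ^ r))"
        unfolding K_def using nr Kn
        by (metis add.commute nat_div_distrib of_nat_0_le_iff nat_int)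
      also have "\<dots> = nat \<lfloor>?x * real b ^ (m * k)\<rfloor>"
        using floor_pow_div[OF b0] by simp
      also have "\<dots> = Aseq (az z) BB k" using floor_psi by simp
      finally show ?thesis .
    qed
    finally have e: "(\<Prod>j=1..Suc n. \<gamma> (digit b ?x j)) = R b \<gamma> r K * R b \<gamma> (m * k) (Aseq (az z) BB k)" .
    have a1: "R b \<gamma> r K \<le> G ^ m"
    proof -
      have "R b \<gamma> r K \<le> G ^ r" using R_le[of b \<gamma> G] gG b0 by blast
      also have "\<dots> \<le> G ^ m" using G1 rm by (intro power_increasing) auto
      finally show ?thesis .
    qed
    have a2: "R b \<gamma> (m * k) (Aseq (az z) BB k) \<le> c ^ (n div m)"
    proof -
      have "c ^ k \<le> c ^ (n div m)"
        using c0 c1 by (intro power_decreasing) (auto simp: k_def div_le_mono)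
      then show ?thesis using R_Aseq[of k z] by linarith
    qed
    have p1: "0 \<le> R b \<gamma> r K" "0 \<le> R b \<gamma> (m * k) (Aseq (az z) BB k)"
      using R_pos[of b \<gamma>] gpos b0 by (simp_all add: less_imp_le)
    show ?thesis unfolding e using a1 a2 p1 G1 c0
      by (intro mult_mono) auto
  qed
  have summ: "summable (\<lambda>n. \<Prod>j=1..Suc n. \<gamma> (digit b ?x j))"
  proof (rule summable_comparison_test[where g="\<lambda>n. G ^ m * c ^ (n div m)"])
    have nn: "0 \<le> (\<Prod>j=1..Suc n. \<gamma> (digit b ?x j))" for n
      using gpos digit_lt[OF b0] by (intro prod_nonneg) (auto simp: less_imp_le)
    show "\<exists>N. \<forall>n\<ge>N. norm (\<Prod>j=1..Suc n. \<gamma> (digit b ?x j)) \<le> G ^ m * c ^ (n div m)"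
      using bound nn by auto
    show "summable (\<lambda>n. G ^ m * c ^ (n div m))"
      using summable_div_pow[OF c0 c1] m1 by (intro summable_mult) auto
  qed
  show ?thesis using summ psi_range[of z] by (simp add: Xset_def)
qed

lemma psi_sep:
  assumes z: "0 \<le> z" "z < 1" and z': "0 \<le> z'" "z' < 1" and ne: "z \<noteq> z'"
  shows "\<exists>k. \<bar>z - z'\<bar> < 1 / real NN ^ k \<and> 1 / real BB ^ Suc k \<le> \<bar>psi z - psi z'\<bar>"
proof -
  obtain k where agree: "\<forall>j. 1 \<le> j \<and> j \<le> k \<longrightarrow> digit NN z j = digit NN z' j"
    and dk: "digit NN z (Suc k) \<noteq> digit NN z' (Suc k)" and close: "\<bar>z - z'\<bar> < 1 / real NN ^ k"
    using first_diff_digit[OF NN2 z z' ne] by blast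
  have N0: "NN > 0" using NN2 by simp
  have al: "az z l = az z' l" if "l < k" for l
    using agree that by (simp add: az_def)
  have A: "Aseq (az z) BB k = Aseq (az z') BB k"
    by (rule Aseq_cong) (rule al)
  have ak: "az z k \<noteq> az z' k"
    unfolding az_def using word_inj[OF digit_lt[OF N0] digit_lt[OF N0]] dk by blast
  then have gap: "\<bar>real (az z k) - real (az z' k)\<bar> \<ge> 2"
    using Wsp az_W[of z k] az_W[of z' k] by fastforce
  have e1: "psi z * real BB ^ Suc k = real (Aseq (az z) BB (Suc k)) + Tval (az z) BB (Suc k)"
    unfolding psi_v by (rule blockseq.v_eq[OF bs])
  have e2: "psi z' * real BB ^ Suc k = real (Aseq (az z') BB (Suc k)) + Tval (az z') BB (Suc k)"
    unfolding psi_v by (rule blockseq.v_eq[OF bs])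
  have T: "0 \<le> Tval (az z) BB (Suc k)" "Tval (az z) BB (Suc k) < 1"
    "0 \<le> Tval (az z') BB (Suc k)" "Tval (az z') BB (Suc k) < 1"
    using blockseq.T_nonneg[OF bs] blockseq.T_lt1[OF bs] by auto
  have "\<bar>psi z - psi z'\<bar> * real BB ^ Suc k = \<bar>psi z * real BB ^ Suc k - psi z' * real BB ^ Suc k\<bar>"
    using BB2 by (metis abs_mult abs_of_pos left_diff_distrib zero_less_power of_nat_0_less_iff
        less_le_trans zero_less_numeral of_nat_numeral)
  also have "\<dots> = \<bar>(real (az z k) - real (az z' k)) + (Tval (az z) BB (Suc k) - Tval (az z') BB (Suc k))\<bar>"
    unfolding e1 e2 using A by simp
  also have "\<dots> \<ge> 1" using gap T by linarith
  finally have "1 \<le> \<bar>psi z - psi z'\<bar> * real BB ^ Suc k" .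
  then have "1 / real BB ^ Suc k \<le> \<bar>psi z - psi z'\<bar>"
    using BB2 by (simp add: field_simps)
  then show ?thesis using close by blast
qed

lemma holder:
  assumes z: "0 \<le> z" "z < 1" and z': "0 \<le> z'" "z' < 1"
  shows "\<bar>z - z'\<bar> \<le> real BB powr t * \<bar>psi z - psi z'\<bar> powr t"
proof (cases "z = z'")
  case True then show ?thesis by simp
next
  case False
  obtain k where close: "\<bar>z - z'\<bar> < 1 / real NN ^ k"
    and sep: "1 / real BB ^ Suc k \<le> \<bar>psi z - psi z'\<bar>"
    using psi_sep[OF z z' False] by blast
  have B0: "real BB > 0" using BB2 by simp
  have NBt: "real BB powr t \<le> real NN" using NB by (simp add: BB_def NN_def)
  have Bt0: "0 < real BB powr t" using B0 by simp
  have "(real BB powr t) ^ k \<le> real NN ^ k"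
    using NBt Bt0 by (intro power_mono) auto
  then have "1 / real NN ^ k \<le> 1 / (real BB powr t) ^ k"
    using Bt0 NN2 by (intro divide_left_mono) auto
  also have "1 / (real BB powr t) ^ k = real BB powr t * (1 / real BB ^ Suc k) powr t"
  proof -
    have "(real BB powr t) ^ k = real BB powr (t * k)"
      using B0 by (simp add: powr_realpow[symmetric] powr_powr mult.commute)
    moreover have "(1 / real BB ^ Suc k) powr t = real BB powr (- (t * Suc k))"
    proof -
      have "1 / real BB ^ Suc k = real BB powr (- real (Suc k))"
        using B0 by (subst powr_minus_divide, subst powr_realpow) auto
      then show ?thesis by (simp add: powr_powr algebra_simps)
    qed
    ultimately show ?thesis using B0
      by (simp add: powr_add[symmetric] powr_minus_divide algebra_simps)
  qed
  also have "\<dots> \<le> real BB powr t * \<bar>psi z - psi z'\<bar> powr t"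
    using sep t0 Bt0 by (intro mult_left_mono powr_mono2) auto
  finally show ?thesis using close by linarith
qed

lemma hd_nonneg: "0 \<le> hd_term s U"
  by (simp add: hd_term_def diameter_ge_0)

lemma cover_bound:
  assumes cov: "Xset b \<gamma> \<subseteq> (\<Union>i. U i)" and bnd: "\<forall>i. bounded (U i)"
  shows "ennreal (1 / (2 * (real BB powr t))) \<le> (\<Sum>i. ennreal (hd_term t (U i)))"
proof -
  define C where "C = real BB powr t"
  have C0: "C > 0" using BB2 by (simp add: C_def)
  define h where "h i = hd_term t (U i)" for i
  have h0: "0 \<le> h i" for i by (simp add: h_def hd_nonneg)
  define V where "V i = {z. 0 \<le> z \<and> z < 1 \<and> psi z \<in> U i}" for i
  have key: "\<bar>z - z'\<bar> \<le> C * h i" if zV: "z \<in> V i" and z'V: "z' \<in> V i" for z z' i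
  proof -
    have zz: "0 \<le> z" "z < 1" "0 \<le> z'" "z' < 1" "psi z \<in> U i" "psi z' \<in> U i"
      using zV z'V by (auto simp: V_def)
    have ne: "U i \<noteq> {}" using zz by auto
    show ?thesis
    proof (cases "t = 0")
      case True
      have "C = 1" using True BB2 by (simp add: C_def)
      moreover have "h i = 1" using True ne by (simp add: h_def hd_term_def)
      ultimately show ?thesis using zz by simp
    next
      case False
      have "\<bar>psi z - psi z'\<bar> \<le> diameter (U i)"
        using diameter_bounded_bound[OF bnd[rule_format, of i] zz(5,6)] by (simp add: dist_real_def)
      then have "\<bar>psi z - psi z'\<bar> powr t \<le> diameter (U i) powr t"
        using t0 by (intro powr_mono2) auto
      then have "\<bar>psi z - psi z'\<bar> powr t \<le> h i"
        using False ne by (simp add: h_def hd_term_def)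
      then show ?thesis using holder[OF zz(1-4)] C0 unfolding C_def
        by (smt (verit) mult_left_mono)
    qed
  qed
  define p where "p i = (SOME z. z \<in> V i)" for i
  define J where "J i = (if V i = {} then {} else {p i - C * h i .. p i + C * h i})" for i
  have sub: "{0..<1} \<subseteq> (\<Union>i. J i)"
  proof
    fix z :: real assume z: "z \<in> {0..<1}"
    have "psi z \<in> Xset b \<gamma>" by (rule psi_X)
    then obtain i where "psi z \<in> U i" using cov by blast
    then have zV: "z \<in> V i" using z by (simp add: V_def)
    then have ne: "V i \<noteq> {}" by auto
    have pV: "p i \<in> V i" unfolding p_def using zV by (rule someI)
    have "\<bar>z - p i\<bar> \<le> C * h i" by (rule key[OF zV pV])
    then have "z \<in> J i" using ne by (simp add: J_def abs_le_iff)
    then show "z \<in> (\<Union>i. J i)" by blast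
  qed
  have meas: "J i \<in> sets lborel" for i by (simp add: J_def)
  have Jle: "emeasure lborel (J i) \<le> ennreal (2 * C) * ennreal (h i)" for i
  proof (cases "V i = {}")
    case True then show ?thesis by (simp add: J_def)
  next
    case False
    have "emeasure lborel (J i) = ennreal (2 * C * h i)"
      using False C0 h0[of i] by (simp add: J_def emeasure_lborel_Icc)
    then show ?thesis using C0 h0[of i] by (simp add: ennreal_mult)
  qed
  have "ennreal 1 = emeasure lborel {0..<(1::real)}" by (simp add: emeasure_lborel_Ico)
  also have "\<dots> \<le> emeasure lborel (\<Union>i. J i)"
    using sub meas by (intro emeasure_mono) auto
  also have "\<dots> \<le> (\<Sum>i. emeasure lborel (J i))"
    using meas by (intro emeasure_subadditive_countably) auto
  also have "\<dots> \<le> (\<Sum>i. ennreal (2 * C) * ennreal (h i))"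
    using Jle by (intro suminf_le) auto
  also have "\<dots> = ennreal (2 * C) * (\<Sum>i. ennreal (h i))"
    by (rule ennreal_suminf_cmult)
  finally have one: "1 \<le> ennreal (2 * C) * (\<Sum>i. ennreal (h i))" by simp
  have "ennreal (1 / (2 * C)) = ennreal (1 / (2 * C)) * 1" by simp
  also have "\<dots> \<le> ennreal (1 / (2 * C)) * (ennreal (2 * C) * (\<Sum>i. ennreal (h i)))"
    by (rule mult_left_mono[OF one]) simp
  also have "\<dots> = (ennreal (1 / (2 * C)) * ennreal (2 * C)) * (\<Sum>i. ennreal (h i))"
    by (simp only: mult.assoc)
  also have "\<dots> = (\<Sum>i. ennreal (h i))"
  proof -
    have eq: "ennreal (1 / (2 * C)) * ennreal (2 * C) = 1"
      by (subst ennreal_mult[symmetric]) (use C0 in auto)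
    show ?thesis by (simp only: eq mult_1)
  qed
  finally show ?thesis by (simp add: C_def h_def)
qed

lemma measure_pos: "hausdorff_measure t (Xset b \<gamma>) \<noteq> 0"
proof -
  define C where "C = real BB powr t"
  have C0: "C > 0" using BB2 by (simp add: C_def)
  have "ennreal (1 / (2 * C)) \<le> hausdorff_approx t 1 (Xset b \<gamma>)"
    unfolding hausdorff_approx_def
    by (rule INF_greatest) (use cover_bound in \<open>auto simp: C_def\<close>)
  also have "\<dots> \<le> hausdorff_measure t (Xset b \<gamma>)"
    unfolding hausdorff_measure_def by (rule SUP_upper) simp
  finally show ?thesis using C0
    by (metis ennreal_eq_0_iff divide_pos_pos le_zero_eq not_less zero_less_numeral mult_pos_pos zero_less_one)
qed

end



definition fE :: "(nat \<Rightarrow> real) \<Rightarrow> nat \<Rightarrow> real \<Rightarrow> real" where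
  "fE \<gamma> b s = (\<Sum>i<b. exp (- s * ln (\<gamma> i)))"

definition gE :: "(nat \<Rightarrow> real) \<Rightarrow> nat \<Rightarrow> real \<Rightarrow> real" where
  "gE \<gamma> b s = (\<Sum>i<b. - ln (\<gamma> i) * exp (- s * ln (\<gamma> i))) / fE \<gamma> b s"

lemma fE_pos: "b > 0 \<Longrightarrow> fE \<gamma> b s > 0"
  unfolding fE_def by (intro sum_pos) auto

lemma fE_powr: "\<forall>i<b. \<gamma> i > 0 \<Longrightarrow> fE \<gamma> b s = (\<Sum>i<b. \<gamma> i powr (- s))"
  unfolding fE_def powr_def by (intro sum.cong) auto

lemma phi_deriv: "b > 0 \<Longrightarrow> ((\<lambda>s. ln (fE \<gamma> b s)) has_real_derivative gE \<gamma> b s) (at s)"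
proof -
  assume b: "b > 0"
  have d: "((\<lambda>x. \<Sum>i<b. exp (- x * ln (\<gamma> i))) has_real_derivative
      (\<Sum>i<b. - ln (\<gamma> i) * exp (- s * ln (\<gamma> i)))) (at s)"
  proof (rule DERIV_sum)
    fix i
    show "((\<lambda>x. exp (- x * ln (\<gamma> i))) has_real_derivative - ln (\<gamma> i) * exp (- s * ln (\<gamma> i))) (at s)"
      by (rule derivative_eq_intros refl | simp)+
  qed
  show ?thesis unfolding gE_def
    using DERIV_chain2[OF DERIV_ln[OF fE_pos[OF b, of \<gamma> s]] d[folded fE_def]]
    by (simp add: fE_def divide_inverse mult.commute)
qed

lemma gE_cont: "b > 0 \<Longrightarrow> isCont (gE \<gamma> b) x"
proof -
  assume b: "b > 0"
  have "fE \<gamma> b x \<noteq> 0" using fE_pos[OF b] by (metis less_irrefl)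
  then show ?thesis unfolding gE_def fE_def
    by (intro continuous_intros) (auto simp: fE_def)
qed

lemma phi_cont: "b > 0 \<Longrightarrow> continuous_on S (\<lambda>s. ln (fE \<gamma> b s))"
  by (intro continuous_at_imp_continuous_on ballI DERIV_isCont[OF phi_deriv]) auto

lemma min_exists:
  fixes \<gamma> :: "nat \<Rightarrow> real"
  assumes b2: "b \<ge> 2" and lt: "\<exists>i<b. \<gamma> i < 1" and pos: "\<forall>i<b. \<gamma> i > 0"
  shows "\<exists>s0\<ge>0. (\<forall>s\<ge>0. ln (fE \<gamma> b s0) \<le> ln (fE \<gamma> b s)) \<and>
                 (\<forall>s>s0. ln (fE \<gamma> b s0) < ln (fE \<gamma> b s))"
proof -
  define \<phi> where "\<phi> s = ln (fE \<gamma> b s)" for s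
  have b0: "b > 0" using b2 by simp
  obtain i0 where i0: "i0 < b" "\<gamma> i0 < 1" using lt by blast
  define c0 where "c0 = - ln (\<gamma> i0)"
  have c0: "c0 > 0" using i0 pos by (simp add: c0_def)
  have lowb: "\<phi> s \<ge> s * c0" if "s \<ge> 0" for s
  proof -
    have "exp (- s * ln (\<gamma> i0)) \<le> (\<Sum>i<b. exp (- s * ln (\<gamma> i)))"
      using i0 by (intro member_le_sum) auto
    then have "exp (s * c0) \<le> fE \<gamma> b s"
      unfolding fE_def c0_def by simp
    then have "ln (exp (s * c0)) \<le> \<phi> s"
      unfolding \<phi>_def by (intro ln_mono) auto
    then show ?thesis by simp
  qed
  have phi0: "\<phi> 0 = ln b" by (simp add: \<phi>_def fE_def)
  define S0 where "S0 = ln b / c0"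
  have S0: "S0 \<ge> 0" using b2 c0 by (simp add: S0_def)
  have big: "\<phi> s > \<phi> 0" if "s > S0" for s
  proof -
    have "ln b < s * c0" using that c0 by (simp add: S0_def field_simps)
    then show ?thesis using lowb[of s] that S0 phi0 by simp
  qed
  have cont: "continuous_on {0..S0} \<phi>" unfolding \<phi>_def by (rule phi_cont[OF b0])
  obtain x0 where x0: "x0 \<in> {0..S0}" "\<forall>y\<in>{0..S0}. \<phi> x0 \<le> \<phi> y"
    using continuous_attains_inf[OF compact_Icc _ cont] S0 by auto
  define Z where "Z = {s \<in> {0..S0}. \<phi> s = \<phi> x0}"
  have "closed Z" unfolding Z_def by (rule continuous_closed_preimage_constant[OF cont]) simp
  moreover have "bounded Z" unfolding Z_def by (rule bounded_subset[of "{0..S0}"]) auto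
  ultimately have "compact Z" by (simp add: compact_eq_bounded_closed)
  moreover have "Z \<noteq> {}" using x0 by (auto simp: Z_def)
  ultimately obtain s0 where s0: "s0 \<in> Z" "\<forall>y\<in>Z. y \<le> s0"
    using compact_attains_sup by blast
  have s0v: "\<phi> s0 = \<phi> x0" "0 \<le> s0" "s0 \<le> S0" using s0 by (auto simp: Z_def)
  have A: "\<phi> s0 \<le> \<phi> s" if "s \<ge> 0" for s
  proof (cases "s \<le> S0")
    case True then show ?thesis using x0 s0v that by auto
  next
    case False then show ?thesis using big[of s] x0(2)[rule_format, of 0] S0 s0v by auto
  qed
  have Bq: "\<phi> s0 < \<phi> s" if "s > s0" for s
  proof (cases "s \<le> S0")
    case True
    have "\<phi> s0 \<le> \<phi> s" using A that s0v by auto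
    moreover have "\<phi> s \<noteq> \<phi> s0"
    proof
      assume "\<phi> s = \<phi> s0"
      then have "s \<in> Z" using True that s0v by (auto simp: Z_def)
      then show False using s0 that by auto
    qed
    ultimately show ?thesis by simp
  next
    case False then show ?thesis using big[of s] x0(2)[rule_format, of 0] S0 s0v by auto
  qed
  show ?thesis using A Bq s0v unfolding \<phi>_def by blast
qed

lemma gE_min0:
  assumes b0: "b > 0" and s0: "s0 > 0" and mn: "\<forall>s\<ge>0. ln (fE \<gamma> b s0) \<le> ln (fE \<gamma> b s)"
  shows "gE \<gamma> b s0 = 0"
proof (rule DERIV_local_min[OF phi_deriv[OF b0] s0])
  show "\<forall>y. \<bar>s0 - y\<bar> < s0 \<longrightarrow> ln (fE \<gamma> b s0) \<le> ln (fE \<gamma> b y)"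
    using mn by auto
qed

lemma isCont_eps:
  fixes g :: "real \<Rightarrow> real"
  assumes "isCont g x" "e > 0"
  shows "\<exists>d>0. \<forall>y. \<bar>y - x\<bar> < d \<longrightarrow> \<bar>g y - g x\<bar> < e"
proof -
  obtain d where d: "d > 0" "\<forall>y. y \<noteq> x \<and> norm (y - x) < d \<longrightarrow> norm (g y - g x) < e"
    using assms unfolding isCont_def LIM_eq by blast
  have "\<forall>y. \<bar>y - x\<bar> < d \<longrightarrow> \<bar>g y - g x\<bar> < e"
  proof (intro allI impI)
    fix y assume "\<bar>y - x\<bar> < d"
    then show "\<bar>g y - g x\<bar> < e" using d assms(2) by (cases "y = x") auto
  qed
  then show ?thesis using d(1) by blast
qed

lemma params:
  fixes \<gamma> :: "nat \<Rightarrow> real"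
  assumes b0: "b > 0" and s00: "s0 \<ge> 0"
    and mn: "\<forall>s\<ge>0. ln (fE \<gamma> b s0) \<le> ln (fE \<gamma> b s)"
    and strict: "\<forall>s>s0. ln (fE \<gamma> b s0) < ln (fE \<gamma> b s)"
    and L: "L < ln (fE \<gamma> b s0)"
  shows "\<exists>s lam mu Bt A. s \<ge> 0 \<and> lam > 0 \<and> mu > 0 \<and> Bt > 0 \<and>
     ln (fE \<gamma> b s) - ln (fE \<gamma> b (s - lam)) > lam * Bt \<and>
     ln (fE \<gamma> b (s + mu)) - ln (fE \<gamma> b s) < mu * A \<and>
     ln (fE \<gamma> b s) - s * A > L"
proof -
  define \<phi> where "\<phi> s = ln (fE \<gamma> b s)" for s
  define g where "g = gE \<gamma> b"
  have D: "(\<phi> has_real_derivative g x) (at x)" for x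
    unfolding \<phi>_def g_def by (rule phi_deriv[OF b0])
  have gc: "isCont g x" for x unfolding g_def by (rule gE_cont[OF b0])
  have sg: "s0 * \<bar>g s0\<bar> = 0"
  proof (cases "s0 = 0")
    case False
    then have "g s0 = 0" unfolding g_def using gE_min0[OF b0 _ mn] s00 by simp
    then show ?thesis by simp
  qed simp
  define \<epsilon> where "\<epsilon> = \<phi> s0 - L"
  have e0: "\<epsilon> > 0" using L by (simp add: \<epsilon>_def \<phi>_def)
  define \<eta> where "\<eta> = \<epsilon> / (4 * (s0 + 1))"
  have eta0: "\<eta> > 0" using e0 s00 by (simp add: \<eta>_def)
  obtain \<rho> where rho: "\<rho> > 0" "\<forall>x. \<bar>x - s0\<bar> < \<rho> \<longrightarrow> \<bar>g x - g s0\<bar> < \<eta>"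
    using isCont_eps[OF gc[of s0] eta0] by blast
  define h where "h = min (\<rho> / 2) (min 1 (\<epsilon> / (4 * (\<bar>g s0\<bar> + 1))))"
  have h0: "h > 0" using rho e0 by (simp add: h_def)
  have h1: "h \<le> \<rho> / 2" "h \<le> 1" "h \<le> \<epsilon> / (4 * (\<bar>g s0\<bar> + 1))"
    unfolding h_def by linarith+
  obtain \<xi> where xi: "\<xi> > s0" "\<xi> < s0 + h" "\<phi> (s0 + h) - \<phi> s0 = (s0 + h - s0) * g \<xi>"
    using MVT2[of s0 "s0 + h" \<phi> g] h0 D by auto
  have gxi: "g \<xi> > 0"
  proof -
    have "\<phi> (s0 + h) > \<phi> s0" using strict h0 unfolding \<phi>_def by simp
    then have "0 < h * g \<xi>" using xi(3) by simp
    then show ?thesis using h0 by (simp add: zero_less_mult_iff)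
  qed
  obtain \<rho>2 where rho2: "\<rho>2 > 0" "\<forall>x. \<bar>x - \<xi>\<bar> < \<rho>2 \<longrightarrow> \<bar>g x - g \<xi>\<bar> < g \<xi> / 2"
    using isCont_eps[OF gc[of \<xi>], of "g \<xi> / 2"] gxi by auto
  define lam where "lam = \<rho>2 / 2"
  have lam0: "lam > 0" using rho2 by (simp add: lam_def)
  obtain \<zeta> where ze: "\<zeta> > \<xi> - lam" "\<zeta> < \<xi>" "\<phi> \<xi> - \<phi> (\<xi> - lam) = (\<xi> - (\<xi> - lam)) * g \<zeta>"
    using MVT2[of "\<xi> - lam" \<xi> \<phi> g] lam0 D by auto
  have gze: "g \<zeta> > g \<xi> / 2"
    using rho2(2)[rule_format, of \<zeta>] ze lam0 by (simp add: lam_def abs_if split: if_splits)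
  define Bt where "Bt = g \<xi> / 4"
  have i: "\<phi> \<xi> - \<phi> (\<xi> - lam) > lam * Bt"
  proof -
    have "lam * Bt < lam * g \<zeta>" using gze gxi lam0 by (simp add: Bt_def)
    then show ?thesis using ze(3) by simp
  qed
  define mu where "mu = h / 2"
  have mu0: "mu > 0" using h0 by (simp add: mu_def)
  obtain \<zeta>' where ze': "\<zeta>' > \<xi>" "\<zeta>' < \<xi> + mu" "\<phi> (\<xi> + mu) - \<phi> \<xi> = (\<xi> + mu - \<xi>) * g \<zeta>'"
    using MVT2[of \<xi> "\<xi> + mu" \<phi> g] mu0 D by auto
  define A where "A = \<bar>g s0\<bar> + \<eta>"
  have gze': "g \<zeta>' < A"
  proof -
    have "\<bar>\<zeta>' - s0\<bar> < \<rho>" using ze' xi h1 by (simp add: mu_def)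
    then have "\<bar>g \<zeta>' - g s0\<bar> < \<eta>" using rho(2) by blast
    then show ?thesis by (simp add: A_def)
  qed
  have ii: "\<phi> (\<xi> + mu) - \<phi> \<xi> < mu * A"
    using ze'(3) gze' mu0 by simp
  have iii: "\<phi> \<xi> - \<xi> * A > L"
  proof -
    have "\<xi> * A \<le> (s0 + h) * A"
      using xi A_def eta0 by (intro mult_right_mono) auto
    also have "\<dots> = s0 * \<bar>g s0\<bar> + s0 * \<eta> + h * \<bar>g s0\<bar> + h * \<eta>"
      by (simp add: A_def algebra_simps)
    also have "\<dots> = (s0 + h) * \<eta> + h * \<bar>g s0\<bar>" using sg by (simp add: algebra_simps)
    also have "(s0 + h) * \<eta> \<le> (s0 + 1) * \<eta>" using h1 eta0 by (intro mult_right_mono) auto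
    also have "(s0 + 1) * \<eta> = \<epsilon> / 4" using s00 by (simp add: \<eta>_def field_simps)
    also have "h * \<bar>g s0\<bar> \<le> \<epsilon> / 4"
    proof -
      have "h * \<bar>g s0\<bar> \<le> \<epsilon> / (4 * (\<bar>g s0\<bar> + 1)) * \<bar>g s0\<bar>"
        using h1 by (intro mult_right_mono) auto
      also have "\<dots> \<le> \<epsilon> / (4 * (\<bar>g s0\<bar> + 1)) * (\<bar>g s0\<bar> + 1)"
        using e0 by (intro mult_left_mono) auto
      also have "\<dots> = \<epsilon> / 4"
      proof -
        have nz: "\<bar>g s0\<bar> + 1 \<noteq> 0" using abs_ge_zero[of "g s0"] by linarith
        show ?thesis using nz by (simp add: field_simps)
      qed
      finally show ?thesis .
    qed
    finally have "\<xi> * A \<le> \<epsilon> / 4 + \<epsilon> / 4" by simp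
    moreover have "\<phi> s0 \<le> \<phi> \<xi>" using mn xi s00 unfolding \<phi>_def by simp
    ultimately show ?thesis using e0 by (simp add: \<epsilon>_def)
  qed
  show ?thesis
    using xi s00 lam0 mu0 gxi i ii iii unfolding \<phi>_def Bt_def
    by (intro exI[of _ \<xi>] exI[of _ lam] exI[of _ mu] exI[of _ "g \<xi> / 4"] exI[of _ A]) auto
qed



lemma sum_R_powr:
  assumes b0: "b > 0" and pos: "\<forall>i<b. \<gamma> i > 0"
  shows "(\<Sum>K<b ^ m. R b \<gamma> m K powr e) = fE \<gamma> b (- e) ^ m"
proof -
  have "(\<Sum>K<b ^ m. R b \<gamma> m K powr e) = (\<Sum>K<b ^ m. R b (\<lambda>i. \<gamma> i powr e) m K)"
    using R_powr[of b \<gamma> e m] pos b0 by simp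
  also have "\<dots> = (\<Sum>i<b. \<gamma> i powr e) ^ m" by (rule R_sum[OF b0])
  also have "(\<Sum>i<b. \<gamma> i powr e) = fE \<gamma> b (- e)" using fE_powr[OF pos] by simp
  finally show ?thesis .
qed

lemma count_bound:
  fixes \<gamma> :: "nat \<Rightarrow> real"
  assumes b0: "b > 0" and pos: "\<forall>i<b. \<gamma> i > 0" and s0: "s \<ge> 0"
    and a0: "a > 0" and c0: "c > 0" and lam: "lam \<ge> 0" and mu: "mu \<ge> 0"
  shows "fE \<gamma> b s ^ m \<le> real (card {K \<in> {..<b ^ m}. a \<le> R b \<gamma> m K \<and> R b \<gamma> m K \<le> c}) * a powr (- s)
           + c powr (- lam) * fE \<gamma> b (s - lam) ^ m + a powr mu * fE \<gamma> b (s + mu) ^ m"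
proof -
  let ?P = "\<lambda>K. a \<le> R b \<gamma> m K \<and> R b \<gamma> m K \<le> c"
  have pw: "R b \<gamma> m K powr (- s) \<le> (if ?P K then a powr (- s) else 0)
      + c powr (- lam) * R b \<gamma> m K powr (lam - s) + a powr mu * R b \<gamma> m K powr (- s - mu)" for K
  proof -
    define G where "G = R b \<gamma> m K"
    have G0: "G > 0" unfolding G_def using R_pos[of b \<gamma>] pos b0 by auto
    have t2: "0 \<le> c powr (- lam) * G powr (lam - s)" "0 \<le> a powr mu * G powr (- s - mu)" by simp_all
    consider "?P K" | "G > c" | "G < a" unfolding G_def by linarith
    then show ?thesis
    proof cases
      case 1
      then have "G powr (- s) \<le> a powr (- s)" using s0 a0 G_def by (intro powr_mono2') auto
      moreover have "(if ?P K then a powr (- s) else 0) = a powr (- s)" using 1 by simp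
      ultimately show ?thesis using t2 unfolding G_def by linarith
    next
      case 2
      have "ln c \<le> ln G" using 2 c0 by simp
      then have "0 \<le> lam * (ln G - ln c)" using lam by simp
      then have "- s * ln G \<le> - lam * ln c + (lam - s) * ln G"
        by (simp add: algebra_simps)
      then have "G powr (- s) \<le> c powr (- lam) * G powr (lam - s)"
        using G0 c0 by (simp add: powr_def exp_add[symmetric])
      moreover have "0 \<le> (if ?P K then a powr (- s) else 0)" by simp
      ultimately show ?thesis using t2 unfolding G_def by linarith
    next
      case 3
      have "ln G \<le> ln a" using 3 G0 by simp
      then have "0 \<le> mu * (ln a - ln G)" using mu by simp
      then have "- s * ln G \<le> mu * ln a + (- s - mu) * ln G"
        by (simp add: algebra_simps)
      then have "G powr (- s) \<le> a powr mu * G powr (- s - mu)"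
        using G0 a0 by (simp add: powr_def exp_add[symmetric])
      moreover have "0 \<le> (if ?P K then a powr (- s) else 0)" by simp
      ultimately show ?thesis using t2 unfolding G_def by linarith
    qed
  qed
  have "fE \<gamma> b s ^ m = (\<Sum>K<b ^ m. R b \<gamma> m K powr (- s))"
    using sum_R_powr[OF b0 pos, of m "- s"] by simp
  also have "\<dots> \<le> (\<Sum>K<b ^ m. (if ?P K then a powr (- s) else 0)
      + c powr (- lam) * R b \<gamma> m K powr (lam - s) + a powr mu * R b \<gamma> m K powr (- s - mu))"
    by (rule sum_mono) (rule pw)
  also have "\<dots> = (\<Sum>K<b ^ m. (if ?P K then a powr (- s) else 0))
      + c powr (- lam) * (\<Sum>K<b ^ m. R b \<gamma> m K powr (lam - s))
      + a powr mu * (\<Sum>K<b ^ m. R b \<gamma> m K powr (- s - mu))"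
    by (simp add: sum.distrib sum_distrib_left)
  also have "(\<Sum>K<b ^ m. (if ?P K then a powr (- s) else 0)) = real (card {K \<in> {..<b ^ m}. ?P K}) * a powr (- s)"
    by (simp add: sum.inter_filter[symmetric])
  also have "(\<Sum>K<b ^ m. R b \<gamma> m K powr (lam - s)) = fE \<gamma> b (s - lam) ^ m"
    using sum_R_powr[OF b0 pos, of m "lam - s"] by simp
  also have "(\<Sum>K<b ^ m. R b \<gamma> m K powr (- s - mu)) = fE \<gamma> b (s + mu) ^ m"
    using sum_R_powr[OF b0 pos, of m "- s - mu"] by (simp add: algebra_simps)
  finally show ?thesis .
qed

lemma exp_pow_powr: "(exp (x::real) ^ m) powr y = exp (x * y) ^ m"
proof -
  have "exp x ^ m = exp (real m * x)" by (simp add: exp_of_nat_mult)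
  then show ?thesis by (simp add: powr_def exp_of_nat_mult[symmetric] algebra_simps)
qed

lemma pow_powr_nat: "real b > 0 \<Longrightarrow> real (b ^ m) powr t = (real b powr t) ^ m"
proof -
  assume b: "real b > 0"
  have "real (b ^ m) powr t = exp (t * ln (real b ^ m))" using b by (simp add: powr_def)
  also have "\<dots> = exp (real m * (t * ln (real b)))" using b by (simp add: ln_realpow algebra_simps)
  also have "\<dots> = exp (t * ln (real b)) ^ m" by (simp add: exp_of_nat_mult)
  also have "\<dots> = (real b powr t) ^ m" using b by (simp add: powr_def)
  finally show ?thesis .
qed

lemma exists_W:
  fixes \<gamma> :: "nat \<Rightarrow> real"
  assumes b2: "b \<ge> 2" and pos: "\<forall>i<b. \<gamma> i > 0" and t0: "t \<ge> 0" and s0: "s \<ge> 0"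
    and lam: "lam > 0" and mu: "mu > 0" and Bt: "Bt > 0"
    and i: "ln (fE \<gamma> b s) - ln (fE \<gamma> b (s - lam)) > lam * Bt"
    and ii: "ln (fE \<gamma> b (s + mu)) - ln (fE \<gamma> b s) < mu * A"
    and iii: "ln (fE \<gamma> b s) - s * A > t * ln b"
  shows "\<exists>m W. m \<ge> 1 \<and> W \<subseteq> {..<b ^ m} \<and> (\<forall>K\<in>W. R b \<gamma> m K \<le> exp (- Bt) ^ m) \<and>
           real (card W) \<ge> 2 * real (b ^ m) powr t + 4"
proof -
  have b0: "b > 0" using b2 by simp
  define f where "f = fE \<gamma> b s"
  have f0: "f > 0" unfolding f_def by (rule fE_pos[OF b0])
  have f1: "fE \<gamma> b (s - lam) > 0" "fE \<gamma> b (s + mu) > 0" using fE_pos[OF b0] by auto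
  define r1 where "r1 = exp (Bt * lam) * fE \<gamma> b (s - lam) / f"
  define r2 where "r2 = exp (- A * mu) * fE \<gamma> b (s + mu) / f"
  define P where "P = real b powr t"
  define q where "q = exp (- A * s) * f / P"
  have P1: "P \<ge> 1" using b2 t0 by (simp add: P_def ge_one_powr_ge_zero)
  have r1: "0 < r1" "r1 < 1"
  proof -
    have "ln (fE \<gamma> b (s - lam)) < ln f - lam * Bt" using i by (simp add: f_def)
    then have "fE \<gamma> b (s - lam) < exp (ln f - lam * Bt)"
      using f1 by (metis exp_ln exp_less_mono)
    then have "fE \<gamma> b (s - lam) < f * exp (- (Bt * lam))"
      using f0 by (simp add: exp_diff exp_minus field_simps)
    then show "0 < r1" "r1 < 1" using f0 f1 by (simp_all add: r1_def field_simps exp_minus)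
  qed
  have r2: "0 < r2" "r2 < 1"
  proof -
    have "ln (fE \<gamma> b (s + mu)) < ln f + mu * A" using ii by (simp add: f_def)
    then have "fE \<gamma> b (s + mu) < exp (ln f + mu * A)"
      using f1 by (metis exp_ln exp_less_mono)
    then have "fE \<gamma> b (s + mu) < f * exp (A * mu)"
      using f0 by (simp add: exp_add mult.commute)
    then show "0 < r2" "r2 < 1" using f0 f1 by (simp_all add: r2_def field_simps exp_minus)
  qed
  have q1: "q > 1"
  proof -
    have "t * ln b < ln f - s * A" using iii by (simp add: f_def)
    then have "exp (t * ln b) < exp (ln f - s * A)" by simp
    then have "P < f * exp (- (A * s))"
      using f0 b0 by (simp add: P_def powr_def exp_diff exp_minus field_simps)
    then show ?thesis using P1 by (simp add: q_def field_simps)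
  qed
  have ev1: "\<forall>\<^sub>F m in sequentially. r1 ^ m < 1 / 4"
    using LIMSEQ_power_zero[of r1] r1 by (intro order_tendstoD) auto
  have ev2: "\<forall>\<^sub>F m in sequentially. r2 ^ m < 1 / 4"
    using LIMSEQ_power_zero[of r2] r2 by (intro order_tendstoD) auto
  obtain N where N: "12 < q ^ N" using real_arch_pow[of q 12] q1 by auto
  have ev3: "\<forall>\<^sub>F m in sequentially. q ^ m > 12"
    unfolding eventually_sequentially
  proof (intro exI allI impI)
    fix n assume "N \<le> n"
    then have "q ^ N \<le> q ^ n" using q1 by (intro power_increasing) auto
    then show "12 < q ^ n" using N by linarith
  qed
  have ev4: "\<forall>\<^sub>F m in sequentially. m \<ge> 1"
    by (rule eventually_ge_at_top)
  obtain m where m: "r1 ^ m < 1 / 4" "r2 ^ m < 1 / 4" "q ^ m > 12" "m \<ge> 1"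
    using eventually_happens[OF eventually_conj[OF ev1 eventually_conj[OF ev2 eventually_conj[OF ev3 ev4]]]]
    by auto
  define a where "a = exp (- A) ^ m"
  define c where "c = exp (- Bt) ^ m"
  define W where "W = {K \<in> {..<b ^ m}. a \<le> R b \<gamma> m K \<and> R b \<gamma> m K \<le> c}"
  have cb: "f ^ m \<le> real (card W) * a powr (- s) + c powr (- lam) * fE \<gamma> b (s - lam) ^ m
      + a powr mu * fE \<gamma> b (s + mu) ^ m"
    unfolding W_def f_def using lam mu
    by (intro count_bound[OF b0 pos s0]) (auto simp: a_def c_def)
  have e1: "a powr (- s) = exp (A * s) ^ m" unfolding a_def by (simp add: exp_pow_powr)
  have e2: "c powr (- lam) * fE \<gamma> b (s - lam) ^ m = r1 ^ m * f ^ m"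
    unfolding c_def r1_def using f0 by (simp add: exp_pow_powr power_mult_distrib power_divide)
  have e3: "a powr mu * fE \<gamma> b (s + mu) ^ m = r2 ^ m * f ^ m"
    unfolding a_def r2_def using f0 by (simp add: exp_pow_powr power_mult_distrib power_divide)
  have fm: "f ^ m > 0" using f0 by simp
  have "f ^ m \<le> real (card W) * exp (A * s) ^ m + (r1 ^ m + r2 ^ m) * f ^ m"
    using cb e1 e2 e3 by (simp add: algebra_simps)
  moreover have "(r1 ^ m + r2 ^ m) * f ^ m \<le> f ^ m / 2"
  proof -
    have "(r1 ^ m + r2 ^ m) * f ^ m \<le> (1/2) * f ^ m"
      using m fm by (intro mult_right_mono) auto
    then show ?thesis by simp
  qed
  ultimately have "f ^ m / 2 \<le> real (card W) * exp (A * s) ^ m" by linarith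
  then have "f ^ m * exp (- A * s) ^ m / 2 \<le> real (card W)"
    by (simp add: field_simps power_mult_distrib[symmetric] exp_add[symmetric] exp_minus)
  moreover have "f ^ m * exp (- A * s) ^ m = q ^ m * P ^ m"
  proof -
    have qP: "q * P = exp (- A * s) * f" using P1 by (simp add: q_def)
    have "q ^ m * P ^ m = (q * P) ^ m" by (simp add: power_mult_distrib)
    also have "\<dots> = f ^ m * exp (- A * s) ^ m" unfolding qP by (simp add: power_mult_distrib)
    finally show ?thesis by simp
  qed
  ultimately have cW: "q ^ m * P ^ m / 2 \<le> real (card W)" by simp
  have Pm: "P ^ m \<ge> 1" using P1 by simp
  have "2 * real (b ^ m) powr t + 4 = 2 * P ^ m + 4" using b0 pow_powr_nat[of b m t] by (simp add: P_def)
  also have "\<dots> \<le> 12 * P ^ m / 2" using Pm by simp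
  also have "\<dots> \<le> q ^ m * P ^ m / 2" using m Pm by (intro divide_right_mono mult_right_mono) auto
  finally have "2 * real (b ^ m) powr t + 4 \<le> real (card W)" using cW by linarith
  moreover have "W \<subseteq> {..<b ^ m}" "\<forall>K\<in>W. R b \<gamma> m K \<le> exp (- Bt) ^ m"
    by (auto simp: W_def c_def)
  ultimately show ?thesis using m by blast
qed

lemma parity_split:
  fixes W :: "nat set"
  assumes "finite W"
  shows "\<exists>W'\<subseteq>W. 2 * card W' \<ge> card W \<and> (\<forall>K\<in>W'. \<forall>K'\<in>W'. even K \<longleftrightarrow> even K')"
proof -
  define We where "We = {K \<in> W. even K}"
  define Wo where "Wo = {K \<in> W. odd K}"
  have "card W = card We + card Wo"
    unfolding We_def Wo_def using assms
    by (subst card_Un_disjoint[symmetric]) (auto intro: arg_cong[where f=card])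
  then show ?thesis
  proof (cases "card We \<ge> card Wo")
    case True
    then show ?thesis using \<open>card W = _\<close> by (intro exI[of _ We]) (auto simp: We_def)
  next
    case False
    then show ?thesis using \<open>card W = _\<close> by (intro exI[of _ Wo]) (auto simp: Wo_def)
  qed
qed

lemma lower_bound:
  fixes \<gamma> :: "nat \<Rightarrow> real"
  assumes b2: "b \<ge> 2" and pos: "\<forall>i<b. \<gamma> i > 0" and t0: "t \<ge> 0"
    and s00: "s0 \<ge> 0"
    and mn: "\<forall>s\<ge>0. ln (fE \<gamma> b s0) \<le> ln (fE \<gamma> b s)"
    and strict: "\<forall>s>s0. ln (fE \<gamma> b s0) < ln (fE \<gamma> b s)"
    and L: "t * ln b < ln (fE \<gamma> b s0)"
  shows "hausdorff_measure t (Xset b \<gamma>) \<noteq> 0"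
proof -
  have b0: "b > 0" using b2 by simp
  obtain s lam mu Bt A where p: "s \<ge> 0" "lam > 0" "mu > 0" "Bt > 0"
     "ln (fE \<gamma> b s) - ln (fE \<gamma> b (s - lam)) > lam * Bt"
     "ln (fE \<gamma> b (s + mu)) - ln (fE \<gamma> b s) < mu * A"
     "ln (fE \<gamma> b s) - s * A > t * ln b"
    using params[OF b0 s00 mn strict L] by blast
  obtain m W where mW: "m \<ge> 1" "W \<subseteq> {..<b ^ m}" "\<forall>K\<in>W. R b \<gamma> m K \<le> exp (- Bt) ^ m"
     "real (card W) \<ge> 2 * real (b ^ m) powr t + 4"
    using exists_W[OF b2 pos t0 p] by blast
  define W2 where "W2 = W - {b ^ m - 1}"
  have finW: "finite W" using mW(2) finite_subset by blast
  have cW2: "card W \<le> card W2 + 1"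
  proof -
    have f2: "finite W2" using finW by (simp add: W2_def)
    have "W \<subseteq> insert (b ^ m - 1) W2" by (auto simp: W2_def)
    then have "card W \<le> card (insert (b ^ m - 1) W2)" using f2 by (intro card_mono) auto
    also have "\<dots> \<le> card W2 + 1" using f2 by (simp add: card_insert_if)
    finally show ?thesis .
  qed
  obtain W' where W': "W' \<subseteq> W2" "2 * card W' \<ge> card W2" "\<forall>K\<in>W'. \<forall>K'\<in>W'. even K \<longleftrightarrow> even K'"
    using parity_split[of W2] finW by (auto simp: W2_def)
  define P where "P = real (b ^ m) powr t"
  have P1: "P \<ge> 1" using b2 t0 by (simp add: P_def ge_one_powr_ge_zero)
  have cW': "real (card W') \<ge> P + 1"
  proof -
    have "2 * real (card W') \<ge> real (card W2)" using W'(2) by linarith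
    moreover have "real (card W2) \<ge> real (card W) - 1" using cW2 by linarith
    ultimately show ?thesis using mW(4) by (simp add: P_def)
  qed
  define c where "c = exp (- Bt) ^ m"
  have c0: "0 < c" and c1: "c < 1"
  proof -
    show "0 < c" by (simp add: c_def)
    have "exp (- Bt) < 1" using p(4) by simp
    moreover have "exp (- Bt) ^ m \<le> exp (- Bt) ^ 1"
      using mW(1) \<open>exp (- Bt) < 1\<close> by (intro power_decreasing) auto
    ultimately show "c < 1" unfolding c_def by (metis power_one_right order_le_less_trans)
  qed
  interpret cantor b \<gamma> m W' c t
  proof
    show "b \<ge> 2" "\<forall>i<b. \<gamma> i > 0" "m \<ge> 1" "0 < c" "c < 1" "t \<ge> 0"
      using b2 pos mW c0 c1 t0 by auto
    show "\<forall>K\<in>W'. K \<le> b ^ m - 2"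
    proof
      fix K assume "K \<in> W'"
      then have "K < b ^ m" "K \<noteq> b ^ m - 1" using W'(1) mW(2) by (auto simp: W2_def)
      then show "K \<le> b ^ m - 2" by linarith
    qed
    show "\<forall>K\<in>W'. \<forall>K'\<in>W'. K \<noteq> K' \<longrightarrow> K + 2 \<le> K' \<or> K' + 2 \<le> K"
    proof (intro ballI impI)
      fix K K' assume "K \<in> W'" "K' \<in> W'" "K \<noteq> K'"
      then have "even K \<longleftrightarrow> even K'" using W'(3) by blast
      then show "K + 2 \<le> K' \<or> K' + 2 \<le> K" using \<open>K \<noteq> K'\<close> by presburger
    qed
    show "\<forall>K\<in>W'. R b \<gamma> m K \<le> c" using W'(1) mW(3) by (auto simp: W2_def c_def)
    show "card W' \<ge> 2" using cW' P1 by linarith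
    show "real (card W') \<ge> real (b ^ m) powr t" using cW' by (simp add: P_def)
  qed
  show ?thesis by (rule measure_pos)
qed



lemma geom_tail:
  fixes x :: real
  assumes "0 \<le> x" "x < 1"
  shows "(\<Sum>n\<in>{..M}. if n0 \<le> n then x ^ n else 0) \<le> x ^ n0 / (1 - x)"
proof -
  define f where "f n = (if n0 \<le> n then x ^ n else 0)" for n
  have sf: "summable f"
    by (rule summable_comparison_test[where g="\<lambda>n. x ^ n"])
       (use assms in \<open>auto simp: f_def summable_geometric\<close>)
  have "sum f {..M} \<le> suminf f"
    by (rule sum_le_suminf[OF sf]) (use assms in \<open>auto simp: f_def\<close>)
  also have "suminf f = (\<Sum>n. f (n + n0)) + sum f {..<n0}"
    by (rule suminf_split_initial_segment[OF sf])
  also have "sum f {..<n0} = 0" by (simp add: f_def)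
  also have "(\<Sum>n. f (n + n0)) = (\<Sum>n. x ^ n0 * x ^ n)"
    by (simp add: f_def power_add mult.commute)
  also have "\<dots> = x ^ n0 * (1 / (1 - x))"
    using assms by (subst suminf_mult) (auto simp: summable_geometric suminf_geometric)
  finally show ?thesis unfolding f_def by simp
qed

lemma count_le1:
  fixes \<gamma> :: "nat \<Rightarrow> real"
  assumes b0: "b > 0" and pos: "\<forall>i<b. \<gamma> i > 0" and s0: "s0 \<ge> 0"
  shows "(\<Sum>K\<in>{..b ^ n}. if R b \<gamma> n K \<le> 1 then (1::real) else 0) \<le> 1 + fE \<gamma> b s0 ^ n"
proof -
  have pw: "(if R b \<gamma> n K \<le> 1 then (1::real) else 0) \<le> R b \<gamma> n K powr (- s0)" for K
  proof -
    have R0: "R b \<gamma> n K > 0" using R_pos[of b \<gamma>] pos b0 by auto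
    show ?thesis
    proof (cases "R b \<gamma> n K \<le> 1")
      case True
      then have "ln (R b \<gamma> n K) \<le> 0" using R0 by simp
      then have "0 \<le> - s0 * ln (R b \<gamma> n K)" using s0 by (simp add: mult_nonneg_nonpos)
      then show ?thesis using True R0 by (simp add: powr_def)
    qed simp
  qed
  have "(\<Sum>K\<in>{..b ^ n}. if R b \<gamma> n K \<le> 1 then (1::real) else 0)
      = (\<Sum>K<b ^ n. if R b \<gamma> n K \<le> 1 then (1::real) else 0) + (if R b \<gamma> n (b ^ n) \<le> 1 then 1 else 0)"
    by (simp add: lessThan_Suc_atMost[symmetric])
  also have "\<dots> \<le> (\<Sum>K<b ^ n. R b \<gamma> n K powr (- s0)) + 1"
    by (intro add_mono sum_mono pw) auto
  also have "(\<Sum>K<b ^ n. R b \<gamma> n K powr (- s0)) = fE \<gamma> b s0 ^ n"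
    using sum_R_powr[OF b0 pos, of n "- s0"] by simp
  finally show ?thesis by simp
qed

lemma interval_powr:
  assumes "b > 0" "t > 0"
  shows "(1 / real b ^ n) powr t = (real b powr (- t)) ^ n"
proof -
  have "(1 / real b ^ n) powr t = exp (t * ln (1 / real b ^ n))" using assms by (simp add: powr_def)
  also have "ln (1 / real b ^ n) = - (real n * ln b)" using assms by (simp add: ln_div ln_realpow)
  also have "exp (t * - (real n * ln b)) = exp (- t * ln b) ^ n"
    by (simp add: exp_of_nat_mult[symmetric] algebra_simps)
  also have "\<dots> = (real b powr (- t)) ^ n" using assms by (simp add: powr_def)
  finally show ?thesis .
qed

lemma approx_bound:
  fixes \<gamma> :: "nat \<Rightarrow> real"
  assumes b2: "b \<ge> 2" and pos: "\<forall>i<b. \<gamma> i > 0" and s0: "s0 \<ge> 0" and t0: "t > 0"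
    and r1: "fE \<gamma> b s0 * real b powr (- t) < 1"
    and del: "1 / real b ^ n0 \<le> \<delta>"
  shows "hausdorff_approx t \<delta> (Xset b \<gamma>) \<le>
     ennreal ((real b powr (- t)) ^ n0 / (1 - real b powr (- t))
            + (fE \<gamma> b s0 * real b powr (- t)) ^ n0 / (1 - fE \<gamma> b s0 * real b powr (- t)))"
proof -
  have b0: "b > 0" using b2 by simp
  define \<rho> where "\<rho> = real b powr (- t)"
  define F where "F = fE \<gamma> b s0"
  define r where "r = F * \<rho>"
  have rho0: "0 < \<rho>" and rho1: "\<rho> < 1"
  proof -
    show "0 < \<rho>" using b0 by (simp add: \<rho>_def)
    have "1 < real b powr t" using b2 t0 by (intro gr_one_powr) auto
    then have "1 / real b powr t < 1" by (simp add: divide_less_eq)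
    then show "\<rho> < 1" by (simp add: \<rho>_def powr_minus_divide)
  qed
  have F0: "F > 0" unfolding F_def by (rule fE_pos[OF b0])
  have r0: "0 \<le> r" "r < 1" using F0 rho0 r1 by (simp_all add: r_def F_def \<rho>_def)
  define B where "B = \<rho> ^ n0 / (1 - \<rho>) + r ^ n0 / (1 - r)"
  define cond where "cond n K \<longleftrightarrow> n0 \<le> n \<and> K \<le> b ^ n \<and> R b \<gamma> n K \<le> 1" for n K
  define H where "H p = (if cond (fst p) (snd p) then \<rho> ^ (fst p) else 0)" for p
  define U where "U i = (if cond (fst (prod_decode i)) (snd (prod_decode i))
      then {real (snd (prod_decode i)) / real b ^ fst (prod_decode i) ..
            (real (snd (prod_decode i)) + 1) / real b ^ fst (prod_decode i)} else {})" for i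
  have H0: "0 \<le> H p" for p using rho0 by (simp add: H_def)
  have hU: "hd_term t (U i) = H (prod_decode i)" for i
  proof (cases "cond (fst (prod_decode i)) (snd (prod_decode i))")
    case True
    define n where "n = fst (prod_decode i)"
    define K where "K = snd (prod_decode i)"
    have Ueq: "U i = {real K / real b ^ n .. (real K + 1) / real b ^ n}"
      using True by (simp add: U_def n_def K_def)
    have le: "real K / real b ^ n \<le> (real K + 1) / real b ^ n"
      using b0 by (simp add: divide_right_mono)
    then have ne: "U i \<noteq> {}" unfolding Ueq by simp
    have "diameter (U i) = 1 / real b ^ n"
      unfolding Ueq diameter_closed_interval using le by (simp add: diff_divide_distrib[symmetric])
    then have "hd_term t (U i) = (1 / real b ^ n) powr t" using ne t0 by (simp add: hd_term_def)
    also have "\<dots> = \<rho> ^ n" unfolding \<rho>_def by (rule interval_powr[OF b0 t0])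
    finally show ?thesis using True by (simp add: H_def n_def K_def)
  next
    case False
    then show ?thesis by (simp add: U_def H_def hd_term_def)
  qed
  have Ubnd: "bounded (U i)" for i by (simp add: U_def)
  have Udiam: "diameter (U i) \<le> \<delta>" for i
  proof (cases "cond (fst (prod_decode i)) (snd (prod_decode i))")
    case True
    define n where "n = fst (prod_decode i)"
    define K where "K = snd (prod_decode i)"
    have Ueq: "U i = {real K / real b ^ n .. (real K + 1) / real b ^ n}"
      using True by (simp add: U_def n_def K_def)
    have le: "real K / real b ^ n \<le> (real K + 1) / real b ^ n"
      using b0 by (simp add: divide_right_mono)
    have "diameter (U i) = 1 / real b ^ n"
      unfolding Ueq diameter_closed_interval using le by (simp add: diff_divide_distrib[symmetric])
    also have "\<dots> \<le> 1 / real b ^ n0"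
      using True b2 by (intro divide_left_mono power_increasing) (auto simp: cond_def n_def)
    finally show ?thesis using del by linarith
  next
    case False
    then have "U i = {}" by (simp add: U_def)
    then show ?thesis using del b0 by simp (smt (verit) divide_nonneg_nonneg zero_le_power of_nat_0_le_iff)
  qed
  have cov: "Xset b \<gamma> \<subseteq> (\<Union>i. U i)"
  proof
    fix x assume x: "x \<in> Xset b \<gamma>"
    then have x01: "0 \<le> x" "x \<le> 1" and sx: "summable (\<lambda>n. \<Prod>j=1..Suc n. \<gamma> (digit b x j))"
      by (auto simp: Xset_def)
    have "(\<lambda>n. \<Prod>j=1..Suc n. \<gamma> (digit b x j)) \<longlonglongrightarrow> 0" by (rule summable_LIMSEQ_zero[OF sx])
    then obtain N where N: "\<forall>n\<ge>N. norm (\<Prod>j=1..Suc n. \<gamma> (digit b x j)) < 1"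
      using LIMSEQ_D[of _ 0 1] by fastforce
    define n where "n = Suc (max N n0)"
    have Pn: "(\<Prod>j=1..n. \<gamma> (digit b x j)) \<le> 1"
      using N[rule_format, of "max N n0"] unfolding n_def by simp
    define K where "K = nat \<lfloor>x * real b ^ n\<rfloor>"
    have fl0: "0 \<le> \<lfloor>x * real b ^ n\<rfloor>" using x01 by simp
    have Kb: "K \<le> b ^ n"
    proof -
      have "x * real b ^ n \<le> real b ^ n" using x01 b0 by (simp add: mult_left_le_one_le)
      then have "\<lfloor>x * real b ^ n\<rfloor> \<le> int (b ^ n)"
        by (metis floor_mono floor_of_nat of_nat_power)
      then show ?thesis unfolding K_def by (metis nat_int nat_mono of_nat_power)
    qed
    have RK: "R b \<gamma> n K \<le> 1" using Pn prod_digits_R[OF x01(1) b0, of \<gamma> n] by (simp add: K_def)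
    have cnd: "cond n K" using Kb RK by (simp add: cond_def n_def)
    have xin: "x \<in> {real K / real b ^ n .. (real K + 1) / real b ^ n}"
    proof -
      have "real K = of_int \<lfloor>x * real b ^ n\<rfloor>" using fl0 by (simp add: K_def)
      then have "real K \<le> x * real b ^ n" "x * real b ^ n < real K + 1"
        by linarith+
      then show ?thesis using b0 by (simp add: field_simps)
    qed
    have "U (prod_encode (n, K)) = {real K / real b ^ n .. (real K + 1) / real b ^ n}"
      using cnd by (simp add: U_def)
    then show "x \<in> (\<Union>i. U i)" using xin by blast
  qed
  have partial: "(\<Sum>i\<in>{..M}. H (prod_decode i)) \<le> B" for M
  proof -
    have "(\<Sum>i\<in>{..M}. H (prod_decode i)) = sum H (prod_decode ` {..M})"
    proof -
      have "inj_on prod_decode {..M}" using inj_prod_decode by (metis inj_on_subset top_greatest)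
      then show ?thesis by (simp add: sum.reindex comp_def)
    qed
    also have "\<dots> \<le> sum H ({..M} \<times> {..M})"
    proof (rule sum_mono2)
      show "prod_decode ` {..M} \<subseteq> {..M} \<times> {..M}"
      proof
        fix p assume "p \<in> prod_decode ` {..M}"
        then obtain i where i: "i \<le> M" "p = prod_decode i" by auto
        obtain n K where p: "p = (n, K)" by fastforce
        have "prod_encode (n, K) = i" using i p by (metis prod_decode_inverse)
        then show "p \<in> {..M} \<times> {..M}"
        proof -
          have "n \<le> M" "K \<le> M"
            using le_prod_encode_1[of n K] le_prod_encode_2[of K n] i \<open>prod_encode (n, K) = i\<close> by auto
          then show ?thesis unfolding p by simp
        qed
      qed
    qed (auto simp: H0)
    also have "\<dots> = (\<Sum>n\<in>{..M}. \<Sum>K\<in>{..M}. H (n, K))"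
      using sum.cartesian_product[of "\<lambda>n K. H (n, K)" "{..M}" "{..M}"] by (simp add: case_prod_unfold)
    also have "\<dots> \<le> (\<Sum>n\<in>{..M}. (if n0 \<le> n then \<rho> ^ n else 0) + (if n0 \<le> n then r ^ n else 0))"
    proof (rule sum_mono)
      fix n
      have "(\<Sum>K\<in>{..M}. H (n, K)) = (\<Sum>K\<in>{..M}. if K \<in> {..b ^ n} then H (n, K) else 0)"
        by (intro sum.cong refl) (auto simp: H_def cond_def)
      also have "\<dots> = (\<Sum>K\<in>{..M} \<inter> {..b ^ n}. H (n, K))"
        by (rule sum.inter_restrict[symmetric]) simp
      also have "\<dots> \<le> (\<Sum>K\<in>{..b ^ n}. H (n, K))"
        by (rule sum_mono2) (auto simp: H0)
      also have "\<dots> = (if n0 \<le> n then \<rho> ^ n * (\<Sum>K\<in>{..b ^ n}. if R b \<gamma> n K \<le> 1 then (1::real) else 0) else 0)"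
        by (auto simp: H_def cond_def sum_distrib_left intro!: sum.cong)
      also have "\<dots> \<le> (if n0 \<le> n then \<rho> ^ n * (1 + F ^ n) else 0)"
        using count_le1[OF b0 pos s0, of n] rho0 by (auto simp: F_def intro!: mult_left_mono)
      also have "\<dots> = (if n0 \<le> n then \<rho> ^ n else 0) + (if n0 \<le> n then r ^ n else 0)"
        by (simp add: r_def power_mult_distrib algebra_simps)
      finally show "(\<Sum>K\<in>{..M}. H (n, K)) \<le> (if n0 \<le> n then \<rho> ^ n else 0) + (if n0 \<le> n then r ^ n else 0)" .
    qed
    also have "\<dots> = (\<Sum>n\<in>{..M}. if n0 \<le> n then \<rho> ^ n else 0) + (\<Sum>n\<in>{..M}. if n0 \<le> n then r ^ n else 0)"
      by (rule sum.distrib)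
    also have "\<dots> \<le> B"
      unfolding B_def using geom_tail[of \<rho> n0 M] geom_tail[of r n0 M] rho0 rho1 r0
      by (intro add_mono) auto
    finally show ?thesis .
  qed
  define h where "h i = H (prod_decode i)" for i
  have h0: "0 \<le> h i" for i by (simp add: h_def H0)
  have sh: "summable h"
    by (rule bounded_imp_summable[of h B]) (use h0 partial in \<open>auto simp: h_def\<close>)
  have "suminf h \<le> B"
  proof (rule suminf_le_const[OF sh])
    fix M
    have "sum h {..<M} \<le> sum h {..M}" by (rule sum_mono2) (auto simp: h0)
    also have "\<dots> \<le> B" using partial by (simp add: h_def)
    finally show "sum h {..<M} \<le> B" .
  qed
  have "hausdorff_approx t \<delta> (Xset b \<gamma>) \<le> (\<Sum>i. ennreal (hd_term t (U i)))"
    unfolding hausdorff_approx_def by (rule INF_lower) (use cov Ubnd Udiam in auto)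
  also have "(\<Sum>i. ennreal (hd_term t (U i))) = ennreal (suminf h)"
    unfolding hU h_def[symmetric] by (rule suminf_ennreal2[OF h0 sh])
  also have "\<dots> \<le> ennreal B" using \<open>suminf h \<le> B\<close> by (rule ennreal_leI)
  finally show ?thesis by (simp add: B_def r_def F_def \<rho>_def)
qed



lemma upper_zero:
  fixes \<gamma> :: "nat \<Rightarrow> real"
  assumes b2: "b \<ge> 2" and pos: "\<forall>i<b. \<gamma> i > 0" and s0: "s0 \<ge> 0" and t0: "t > 0"
    and r1: "fE \<gamma> b s0 * real b powr (- t) < 1"
  shows "hausdorff_measure t (Xset b \<gamma>) = 0"
proof -
  define \<rho> where "\<rho> = real b powr (- t)"
  define r where "r = fE \<gamma> b s0 * real b powr (- t)"
  have b0: "b > 0" using b2 by simp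
  have rho0: "0 < \<rho>" and rho1: "\<rho> < 1"
  proof -
    show "0 < \<rho>" using b0 by (simp add: \<rho>_def)
    have "1 < real b powr t" using b2 t0 by (intro gr_one_powr) auto
    then have "1 / real b powr t < 1" by (simp add: divide_less_eq)
    then show "\<rho> < 1" by (simp add: \<rho>_def powr_minus_divide)
  qed
  have r0: "0 \<le> r" "r < 1" using r1 fE_pos[OF b0, of \<gamma> s0] by (simp_all add: r_def)
  have zero: "hausdorff_approx t \<delta> (Xset b \<gamma>) = 0" if d0: "\<delta> > 0" for \<delta>
  proof -
    have "hausdorff_approx t \<delta> (Xset b \<gamma>) \<le> 0"
    proof (rule ennreal_le_epsilon)
      fix e :: real assume e: "0 < e"
      have lim: "(\<lambda>n. \<rho> ^ n / (1 - \<rho>) + r ^ n / (1 - r)) \<longlonglongrightarrow> 0 / (1 - \<rho>) + 0 / (1 - r)"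
        using rho0 rho1 r0
        by (intro tendsto_intros LIMSEQ_power_zero) auto
      then have ev1: "\<forall>\<^sub>F n in sequentially. \<rho> ^ n / (1 - \<rho>) + r ^ n / (1 - r) < e"
        using e by (intro order_tendstoD) auto
      have lim2: "(\<lambda>n. (1 / real b) ^ n) \<longlonglongrightarrow> 0"
        using b2 by (intro LIMSEQ_power_zero) auto
      have ev2: "\<forall>\<^sub>F n in sequentially. (1 / real b) ^ n < \<delta>"
        using order_tendstoD(2)[OF lim2 d0] .
      obtain n0 where n0: "\<rho> ^ n0 / (1 - \<rho>) + r ^ n0 / (1 - r) < e" "(1 / real b) ^ n0 < \<delta>"
        using eventually_happens[OF eventually_conj[OF ev1 ev2]] by auto
      have "1 / real b ^ n0 \<le> \<delta>" using n0(2) by (simp add: power_divide)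
      then have "hausdorff_approx t \<delta> (Xset b \<gamma>) \<le>
          ennreal (\<rho> ^ n0 / (1 - \<rho>) + r ^ n0 / (1 - r))"
        unfolding \<rho>_def r_def by (rule approx_bound[OF b2 pos s0 t0 r1])
      also have "\<dots> \<le> ennreal e" using n0(1) by (intro ennreal_leI) simp
      finally show "hausdorff_approx t \<delta> (Xset b \<gamma>) \<le> 0 + ennreal e" by simp
    qed
    then show ?thesis by simp
  qed
  show ?thesis unfolding hausdorff_measure_def using zero by simp
qed

theorem theorem4p5:
  fixes b :: nat and \<gamma> :: "nat \<Rightarrow> real" and X :: "real set"
  assumes hb: "b \<ge> 2"
    and hpos: "\<forall>i<b. \<gamma> i > 0"
    and hgt: "\<exists>i<b. \<gamma> i > 1"
    and hlt: "\<exists>i<b. \<gamma> i < 1"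
    and hX: "X = {x \<in> {0..1}. summable (\<lambda>n. \<Prod>j=1..Suc n. \<gamma> (digit b x j))}"
  shows "\<exists>s0\<ge>0.
           (\<forall>s\<ge>0. ln (\<Sum>i<b. \<gamma> i powr (-s0)) / ln b \<le> ln (\<Sum>i<b. \<gamma> i powr (-s)) / ln b) \<and>
           hausdorff_dim X = ln (\<Sum>i<b. \<gamma> i powr (-s0)) / ln b"
proof -
  have b0: "b > 0" using hb by simp
  have lnb: "ln (real b) > 0" using hb by simp
  have XX: "X = Xset b \<gamma>" by (simp add: hX Xset_def)
  obtain s0 where s0: "s0 \<ge> 0" and mn: "\<forall>s\<ge>0. ln (fE \<gamma> b s0) \<le> ln (fE \<gamma> b s)"
    and strict: "\<forall>s>s0. ln (fE \<gamma> b s0) < ln (fE \<gamma> b s)"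
    using min_exists[OF hb hlt hpos] by blast
  have fe: "(\<Sum>i<b. \<gamma> i powr (- s)) = fE \<gamma> b s" for s using fE_powr[OF hpos] by simp
  define d where "d = ln (fE \<gamma> b s0) / ln b"
  have d0: "d \<ge> 0"
  proof -
    obtain i0 where i0: "i0 < b" "\<gamma> i0 < 1" using hlt by blast
    have "exp (- s0 * ln (\<gamma> i0)) \<le> fE \<gamma> b s0"
      unfolding fE_def using i0 by (intro member_le_sum) auto
    moreover have "1 \<le> exp (- s0 * ln (\<gamma> i0))"
      using i0 hpos s0 by (simp add: mult_nonneg_nonpos)
    ultimately have "1 \<le> fE \<gamma> b s0" by linarith
    then show ?thesis using lnb by (simp add: d_def)
  qed
  define S where "S = {s. 0 \<le> s \<and> hausdorff_measure s X = 0}"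
  have inS: "t \<in> S" if "t > d" for t
  proof -
    have t0: "t > 0" using that d0 by simp
    have "ln (fE \<gamma> b s0) < t * ln b" using that lnb by (simp add: d_def divide_less_eq)
    then have "fE \<gamma> b s0 < exp (t * ln b)"
      using fE_pos[OF b0, of \<gamma> s0] by (metis exp_less_cancel_iff exp_ln)
    then have "fE \<gamma> b s0 < real b powr t" using b0 by (simp add: powr_def)
    then have "fE \<gamma> b s0 * real b powr (- t) < 1"
      using b0 by (simp add: powr_minus_divide divide_less_eq)
    then show ?thesis using upper_zero[OF hb hpos s0 t0] t0 by (simp add: S_def XX)
  qed
  have geS: "d \<le> t" if "t \<in> S" for t
  proof (rule ccontr)
    assume "\<not> d \<le> t"
    then have "t < ln (fE \<gamma> b s0) / ln b" by (simp add: d_def)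
    then have "t * ln b < ln (fE \<gamma> b s0)" using lnb by (simp add: less_divide_eq)
    moreover have "t \<ge> 0" using that by (simp add: S_def)
    ultimately have "hausdorff_measure t (Xset b \<gamma>) \<noteq> 0"
      using lower_bound[OF hb hpos _ s0 mn strict] by blast
    then show False using that by (simp add: S_def XX)
  qed
  have ne: "S \<noteq> {}" using inS[of "d + 1"] by auto
  have bdd: "bdd_below S" unfolding bdd_below_def S_def by auto
  have "hausdorff_dim X = Inf S" by (simp add: hausdorff_dim_def S_def)
  also have "Inf S = d"
  proof (rule antisym)
    show "d \<le> Inf S" using ne geS by (intro cInf_greatest) auto
    show "Inf S \<le> d"
    proof (rule field_le_epsilon)
      fix e :: real assume "0 < e"
      then show "Inf S \<le> d + e" using inS[of "d + e"] bdd by (intro cInf_lower) auto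
    qed
  qed
  finally have dim: "hausdorff_dim X = d" .
  show ?thesis
  proof (intro exI[of _ s0] conjI allI impI)
    show "0 \<le> s0" by (rule s0)
    fix s :: real assume "0 \<le> s"
    then show "ln (\<Sum>i<b. \<gamma> i powr (-s0)) / ln b \<le> ln (\<Sum>i<b. \<gamma> i powr (-s)) / ln b"
      unfolding fe using mn lnb by (intro divide_right_mono) auto
  next
    show "hausdorff_dim X = ln (\<Sum>i<b. \<gamma> i powr (-s0)) / ln b"
      unfolding fe dim d_def ..
  qed
qed


end
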